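(* Let $V_1,\dots,V_d$ be uniform random variables whose joint distribution is a copula $C^*$ with density $c^*$. Let $Z_1,\dots,Z_d$ be i.i.d. $\mathcal{U}(0,1)$ random variables, independent of $(V_1,\dots,V_d)$. Let $T_1,\dots,T_d$ be regular uniform-distribution-preserving transformations. Then the random vector $\big(T_1^\leftarrow(V_1,Z_1),\dots,T_d^\leftarrow(V_d,Z_d)\big)$ has density $$c(u_1,\dots,u_d)=c^*\big(T_1(u_1),\dots,T_d(u_d)\big).$$
   Context: A function $T:[0,1]\to[0,1]$ is uniform-distribution-preserving (udp) if $T(U)\sim\mathcal{U}(0,1)$ whenever $U\sim\mathcal{U}(0,1)$. A udp transformation is regular if there is a finite partition $0=a_0<a_1<\dots<a_L=1$ such that $T$ is continuously differentiable on each $A_\ell=(a_{\ell-1},a_\ell)$. Let $A=\bigcup_\ell A_\ell$. The stochastic inverse of a regular udp $T$: for $x\in T(A)$, let $\{u\in A:T(u)=x\}=\{r_1(x),\dots,r_{n(x)}(x)\}$ (a finite set, with the weights below summing to one); let $G_x$ be the distribution function of the discrete random variable taking value $r_i(x)$ with probability $1/|T'(r_i(x))|$, and set $T^\leftarrow(x,Z)=G_x^{-1}(Z)$ with $G^{-1}(z)=\inf\{t:G(t)\ge z\}$; for $x\notin T(A)$ set $T^\leftarrow(x,Z)=0$. *)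

theory Defs
  imports "HOL-Probability.Probability"
begin

text \<open>The uniform law on [0,1] is the restriction of Lebesgue
  measure to [0,1] (as a source space) and uniform_measure lborel {0..1} (as a law on the reals).\<close>
definition udp :: "(real \<Rightarrow> real) \<Rightarrow> bool" where
  "udp T \<longleftrightarrow> (\<forall>u\<in>{0..1}. T u \<in> {0..1})
     \<and> T \<in> measurable (restrict_space lborel {0..1}) borel
     \<and> distr (restrict_space lborel {0..1}) borel T = uniform_measure lborel {0..1}"

definition regular_partition :: "(real \<Rightarrow> real) \<Rightarrow> (nat \<Rightarrow> real) \<Rightarrow> nat \<Rightarrow> bool" where
  "regular_partition T a L \<longleftrightarrow> L \<ge> 1 \<and> a 0 = 0 \<and> a L = 1
     \<and> (\<forall>l<L. a l < a (Suc l))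
     \<and> (\<forall>l<L. T C1_differentiable_on {a l<..<a (Suc l)})"

definition partition_set :: "(nat \<Rightarrow> real) \<Rightarrow> nat \<Rightarrow> real set" where
  "partition_set a L = (\<Union>l<L. {a l<..<a (Suc l)})"

definition regular_udp :: "(real \<Rightarrow> real) \<Rightarrow> (nat \<Rightarrow> real) \<Rightarrow> nat \<Rightarrow> bool" where
  "regular_udp T a L \<longleftrightarrow> udp T \<and> regular_partition T a L"

definition gen_inv :: "(real \<Rightarrow> real) \<Rightarrow> real \<Rightarrow> real" where
  "gen_inv G z = Inf {t. G t \<ge> z}"

definition preimage_cdf :: "(real \<Rightarrow> real) \<Rightarrow> real set \<Rightarrow> real \<Rightarrow> real \<Rightarrow> real" where
  "preimage_cdf T A x t = (\<Sum>r\<in>{r\<in>A. T r = x \<and> r \<le> t}. 1 / \<bar>deriv T r\<bar>)"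

definition stoch_inv :: "(real \<Rightarrow> real) \<Rightarrow> real set \<Rightarrow> real \<Rightarrow> real \<Rightarrow> real" where
  "stoch_inv T A x z = (if x \<in> T ` A then gen_inv (preimage_cdf T A x) z else 0)"

definition unit_cube :: "(real^'d) set" where
  "unit_cube = {u. \<forall>i. u $ i \<in> {0..1}}"

end

theory Submission
  imports Defs
begin

lemma measure_eq_atMost:
  fixes M N :: "'b::ordered_euclidean_space measure"
  assumes sM: "sets M = sets borel" and sN: "sets N = sets borel"
    and eq: "\<And>x. emeasure M {..x} = emeasure N {..x}"
    and fin: "\<And>x. emeasure M {..x} \<noteq> \<infinity>"
  shows "M = N"
proof (rule measure_eqI_generator_eq[where E="range atMost" and \<Omega>=UNIV
      and A="\<lambda>n. {..(\<Sum>i\<in>Basis. real n *\<^sub>R i)}"])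
  have "{..x} \<inter> {..y} = {..inf x y}" for x y :: 'b by auto
  then show "Int_stable (range atMost :: 'b set set)"
    by (auto simp: Int_stable_def)
  show "sets M = sigma_sets UNIV (range atMost)"
    by (subst sM, subst borel_eq_atMost) (simp add: sets_measure_of)
  show "sets N = sigma_sets UNIV (range atMost)"
    by (subst sN, subst borel_eq_atMost) (simp add: sets_measure_of)
  show "(\<Union>n. {..(\<Sum>i\<in>Basis. real n *\<^sub>R i)}) = (UNIV :: 'b set)"
  proof -
    have "\<exists>n::nat. x \<le> (\<Sum>i\<in>Basis. real n *\<^sub>R i)" for x :: 'b
    proof -
    obtain n :: nat where n: "Max ((\<bullet>) x ` Basis) \<le> real n"
      using real_arch_simple by blast
    have "x \<le> (\<Sum>i\<in>Basis. real n *\<^sub>R i)"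
      unfolding eucl_le[where 'a='b]
    proof
      fix i :: 'b assume i: "i \<in> Basis"
      have "x \<bullet> i \<le> Max ((\<bullet>) x ` Basis)" using i by (intro Max_ge) auto
      also have "\<dots> \<le> real n" by fact
      finally show "x \<bullet> i \<le> (\<Sum>i\<in>Basis. real n *\<^sub>R i) \<bullet> i"
        using i by (simp add: inner_sum_left inner_Basis if_distrib cong: if_cong)
    qed
    then show ?thesis by blast
    qed
    then show ?thesis by auto
  qed
qed (use eq fin in auto)


lemma vec_meas:
  fixes f :: "'a \<Rightarrow> real^'n"
  assumes "\<And>i. (\<lambda>x. f x $ i) \<in> borel_measurable M"
  shows "f \<in> borel_measurable M"
  unfolding borel_measurable_euclidean_space[where 'c="real^'n"]
  using assms by (auto simp: Basis_vec_def inner_axis)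

lemma nn_integral_vec_prod:
  fixes g :: "'n::finite \<Rightarrow> real \<Rightarrow> ennreal"
  assumes gm: "\<And>i. g i \<in> borel_measurable borel"
  shows "(\<integral>\<^sup>+u. (\<Prod>i\<in>UNIV. g i (u$i)) \<partial>(lborel :: (real^'n) measure)) = (\<Prod>i\<in>UNIV. \<integral>\<^sup>+x. g i x \<partial>lborel)"
proof -
  define f where "f b = g (SOME i. b = axis i 1)" for b :: "real^'n"
  have fi: "f (axis i 1) = g i" for i by (simp add: f_def axis_eq_axis)
  have B: "(Basis :: (real^'n) set) = range (\<lambda>i. axis i (1::real))" by (auto simp: Basis_vec_def)
  have inj: "inj (\<lambda>i::'n. axis i (1::real))" by (auto simp: inj_on_def axis_eq_axis)
  have re: "(\<Prod>b\<in>Basis. h b) = (\<Prod>i\<in>UNIV. h (axis i 1))" for h :: "real^'n \<Rightarrow> ennreal"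
    unfolding B by (subst prod.reindex[OF inj]) simp
  have "(\<integral>\<^sup>+u. (\<Prod>i\<in>UNIV. g i (u$i)) \<partial>(lborel :: (real^'n) measure))
      = (\<integral>\<^sup>+u. (\<Prod>b\<in>Basis. f b (u \<bullet> b)) \<partial>lborel)"
    by (simp add: re fi cart_eq_inner_axis)
  also have "\<dots> = (\<Prod>b\<in>Basis. \<integral>\<^sup>+x. f b x \<partial>lborel)"
  proof (rule nn_integral_lborel_prod)
    fix b :: "real^'n" assume "b \<in> Basis"
    then obtain i where "b = axis i 1" using B by auto
    then show "f b \<in> borel_measurable borel" using fi gm by simp
  qed simp
  also have "\<dots> = (\<Prod>i\<in>UNIV. \<integral>\<^sup>+x. g i x \<partial>lborel)"
    by (simp add: re fi)
  finally show ?thesis .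
qed


lemma prod_indicator_vec:
  fixes u :: "'b^'n"
  shows "(\<Prod>i\<in>UNIV. indicator (S i) (u$i) :: ennreal) = indicator {u. \<forall>i. u$i \<in> S i} u"
proof (cases "\<forall>i. u$i \<in> S i")
  case True then show ?thesis by simp
next
  case False
  then obtain j where j: "u$j \<notin> S j" by auto
  have "(\<Prod>i\<in>UNIV. indicator (S i) (u$i) :: ennreal) = 0"
    by (rule prod_zero) (auto intro!: exI[of _ j] simp: indicator_def j)
  then show ?thesis using False by simp
qed

locale rudp =
  fixes T :: "real \<Rightarrow> real" and a :: "nat \<Rightarrow> real" and L :: nat
  assumes reg: "regular_udp T a L"
begin

abbreviation "A \<equiv> partition_set a L"
definition I :: "nat \<Rightarrow> real set" where "I l = {a l<..<a (Suc l)}"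

lemma L_ge: "L \<ge> 1" and a0: "a 0 = 0" and aL: "a L = 1" and a_step: "l < L \<Longrightarrow> a l < a (Suc l)"
  and C1: "l < L \<Longrightarrow> T C1_differentiable_on I l"
  using reg unfolding regular_udp_def regular_partition_def I_def by auto

lemma udp: "udp T" using reg regular_udp_def by auto

lemma T_01: "u \<in> {0..1} \<Longrightarrow> T u \<in> {0..1}" using udp udp_def by auto
lemma T_meas: "T \<in> borel_measurable (restrict_space lborel {0..1})"
  using udp udp_def by auto
lemma T_distr: "distr (restrict_space lborel {0..1}) borel T = uniform_measure lborel {0..1}"
  using udp udp_def by auto

lemma a_mono_lt: "l < m \<Longrightarrow> m \<le> L \<Longrightarrow> a l < a m"
proof (induction m)
  case 0 thus ?case by simp
next
  case (Suc m)
  show ?case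
  proof (cases "l = m")
    case True thus ?thesis using a_step[of m] Suc by simp
  next
    case False
    then have "a l < a m" using Suc by simp
    also have "\<dots> < a (Suc m)" using a_step[of m] Suc by simp
    finally show ?thesis .
  qed
qed

lemma a_mono_le: "l \<le> m \<Longrightarrow> m \<le> L \<Longrightarrow> a l \<le> a m"
  using a_mono_lt[of l m] by (cases "l = m") auto

lemma I_sub: "l < L \<Longrightarrow> I l \<subseteq> {0<..<1}"
  using a_mono_le[of 0 l] a_mono_le[of "Suc l" L] a0 aL by (auto simp: I_def)

lemma A_eq: "A = (\<Union>l<L. I l)" by (simp add: partition_set_def I_def)

lemma A_sub: "A \<subseteq> {0<..<1}" using I_sub A_eq by auto

lemma I_disj: "l < L \<Longrightarrow> m < L \<Longrightarrow> l \<noteq> m \<Longrightarrow> I l \<inter> I m = {}"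
proof -
  have *: "I l \<inter> I m = {}" if "l < m" "m < L" for l m
    using a_mono_le[of "Suc l" m] that by (auto simp: I_def)
  assume "l < L" "m < L" "l \<noteq> m"
  then show ?thesis using *[of l m] *[of m l] by (cases "l < m") auto
qed

lemma I_open: "open (I l)" by (simp add: I_def)

lemma deriv_I: "l < L \<Longrightarrow> x \<in> I l \<Longrightarrow> (T has_real_derivative deriv T x) (at x)"
  and deriv_cont: "l < L \<Longrightarrow> continuous_on (I l) (deriv T)"
proof -
  assume l: "l < L"
  from C1[OF l] obtain D where D: "\<And>x. x \<in> I l \<Longrightarrow> (T has_vector_derivative D x) (at x)"
    and cD: "continuous_on (I l) D" unfolding C1_differentiable_on_def by blast
  have eq: "\<And>x. x \<in> I l \<Longrightarrow> deriv T x = D x"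
    using D by (intro DERIV_imp_deriv) (simp add: has_real_derivative_iff_has_vector_derivative)
  show "x \<in> I l \<Longrightarrow> (T has_real_derivative deriv T x) (at x)" for x
    using D[of x] eq[of x] by (simp add: has_real_derivative_iff_has_vector_derivative)
  show "continuous_on (I l) (deriv T)"
    using cD eq by (metis continuous_on_cong)
qed

lemma pre_meas: "B \<in> sets borel \<Longrightarrow> {0..1} \<inter> T -` B \<in> sets borel"
proof -
  assume B: "B \<in> sets borel"
  have "T -` B \<inter> space (restrict_space lborel {0..1}) \<in> sets (restrict_space lborel {0..1})"
    using T_meas B by (intro measurable_sets) auto
  then show ?thesis
    by (subst (asm) sets_restrict_space_iff) (auto simp: Int_commute)
qed

lemma U1: "B \<in> sets borel \<Longrightarrow> emeasure lborel ({0..1} \<inter> T -` B) = emeasure lborel ({0..1} \<inter> B)"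
proof -
  assume B: "B \<in> sets borel"
  have "emeasure (distr (restrict_space lborel {0..1}) borel T) B
      = emeasure (restrict_space lborel {0..1}) (T -` B \<inter> {0..1})"
    using T_meas B by (subst emeasure_distr) auto
  also have "\<dots> = emeasure lborel ({0..1} \<inter> T -` B)"
    using pre_meas[OF B] by (subst emeasure_restrict_space) (auto simp: Int_commute)
  finally have 1: "emeasure (distr (restrict_space lborel {0..1}) borel T) B = emeasure lborel ({0..1} \<inter> T -` B)" .
  have "emeasure (uniform_measure lborel {0..1}) B = emeasure lborel ({0..1} \<inter> B)"
    using B by (simp add: Int_commute divide_ennreal_def)
  then show ?thesis using 1 T_distr by simp
qed

lemma deriv_nz: assumes l: "l < L" and x: "x \<in> I l" shows "deriv T x \<noteq> 0"
proof
  assume D0: "deriv T x = 0"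
  have "isCont (deriv T) x"
    using deriv_cont[OF l] x I_open continuous_on_eq_continuous_at by blast
  then obtain e where e: "e > 0" "\<And>y. dist y x < e \<Longrightarrow> dist (deriv T y) (deriv T x) < 1/2"
    unfolding continuous_at_eps_delta by (metis half_gt_zero_iff less_numeral_extra(1))
  obtain e' where e': "e' > 0" "ball x e' \<subseteq> I l"
    using I_open x openE by blast
  define d where "d = min e e' / 2"
  have d: "d > 0" "d < e" "d < e'" using e e' by (auto simp: d_def)
  have K: "{x-d..x+d} \<subseteq> I l"
    using e' d by (auto simp: dist_real_def subset_iff)
  have Dsmall: "\<bar>deriv T y\<bar> < 1/2" if "y \<in> {x-d..x+d}" for y
    using e(2)[of y] that d D0 by (auto simp: dist_real_def)
  have Tclose: "\<bar>T y - T x\<bar> \<le> d/2" if y: "y \<in> {x-d..x+d}" for y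
  proof -
    have der: "DERIV T t :> deriv T t" if "t \<in> {x-d..x+d}" for t
      using deriv_I[OF l] K that by auto
    consider "y = x" | "y < x" | "x < y" by linarith
    then show ?thesis
    proof cases
      case 1 then show ?thesis using d by simp
    next
      case 2
      obtain z where z: "y < z" "z < x" "T x - T y = (x - y) * deriv T z"
        using MVT2[OF 2, of T "deriv T"] der y by fastforce
      have "\<bar>deriv T z\<bar> \<le> 1/2" using Dsmall[of z] z y by auto
      then have "\<bar>T x - T y\<bar> \<le> (x - y) * (1/2)"
        using z 2 by (simp add: abs_mult mult_left_mono)
      then show ?thesis using y abs_minus_commute[of "T x" "T y"] by auto
    next
      case 3
      obtain z where z: "x < z" "z < y" "T y - T x = (y - x) * deriv T z"
        using MVT2[OF 3, of T "deriv T"] der y by fastforce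
      have "\<bar>deriv T z\<bar> \<le> 1/2" using Dsmall[of z] z y by auto
      then have "\<bar>T y - T x\<bar> \<le> (y - x) * (1/2)"
        using z 3 by (simp add: abs_mult mult_left_mono)
      then show ?thesis using y by auto
    qed
  qed
  define J where "J = {T x - d/2..T x + d/2}"
  have "y \<in> {0..1} \<inter> T -` J" if "y \<in> {x-d..x+d}" for y
  proof -
    have "y \<in> {0<..<1}" using K I_sub[OF l] that by blast
    moreover have "\<bar>T y - T x\<bar> \<le> d/2" using Tclose that by blast
    ultimately show ?thesis by (auto simp: J_def; arith)
  qed
  then have "{x-d..x+d} \<subseteq> {0..1} \<inter> T -` J" by blast
  moreover have Jm: "{0..1} \<inter> T -` J \<in> sets borel" by (rule pre_meas) (simp add: J_def)
  ultimately have "emeasure lborel {x-d..x+d} \<le> emeasure lborel ({0..1} \<inter> T -` J)"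
    by (intro emeasure_mono) auto
  also have "\<dots> = emeasure lborel ({0..1} \<inter> J)"
    by (intro U1) (auto simp: J_def)
  also have "\<dots> \<le> emeasure lborel J"
    by (intro emeasure_mono) (auto simp: J_def)
  finally have "ennreal (2*d) \<le> ennreal d" using d by (simp add: J_def)
  then show False using d by (simp add: ennreal_le_iff)
qed

lemma inj_I: assumes l: "l < L" shows "inj_on T (I l)"
proof (rule inj_onI, rule ccontr)
  have *: False if xy: "x \<in> I l" "y \<in> I l" "x < y" "T x = T y" for x y
  proof -
    have sub: "{x..y} \<subseteq> I l" using xy by (auto simp: I_def)
    have "continuous_on {x..y} T"
      using sub deriv_I[OF l] by (meson DERIV_isCont continuous_at_imp_continuous_on subsetD)
    moreover have "T differentiable (at t)" if "x < t" "t < y" for t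
    proof -
      have "t \<in> I l" using sub that by auto
      then show ?thesis using deriv_I[OF l, of t] real_differentiable_def by blast
    qed
    ultimately obtain z where z: "x < z" "z < y" "DERIV T z :> 0"
      using Rolle[OF xy(3,4)] by blast
    then have "deriv T z = 0" by (simp add: DERIV_imp_deriv)
    moreover have "z \<in> I l" using z sub by auto
    ultimately show False using deriv_nz[OF l] by blast
  qed
  fix x y assume "x \<in> I l" "y \<in> I l" "T x = T y" "x \<noteq> y"
  then show False using *[of x y] *[of y x] by (cases "x < y") auto
qed

definition P :: "nat \<Rightarrow> real \<Rightarrow> real \<Rightarrow> real set" where
  "P l b x = {r\<in>I l. T r = x \<and> r \<le> b}"

definition w :: "nat \<Rightarrow> real \<Rightarrow> real \<Rightarrow> real" where
  "w l b x = (\<Sum>r\<in>P l b x. 1 / \<bar>deriv T r\<bar>)"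

lemma P_finite: "l < L \<Longrightarrow> finite (P l b x)"
proof -
  assume l: "l < L"
  have "P l b x \<subseteq> T -` {x} \<inter> I l" by (auto simp: P_def)
  moreover have "finite (T -` {x} \<inter> I l)" using inj_I[OF l] by (intro finite_vimage_IntI) auto
  ultimately show ?thesis by (rule finite_subset)
qed

lemma G_split: "preimage_cdf T A x b = (\<Sum>l<L. w l b x)"
proof -
  have "{r\<in>A. T r = x \<and> r \<le> b} = (\<Union>l\<in>{..<L}. P l b x)"
    by (auto simp: A_eq P_def)
  then have "preimage_cdf T A x b = sum (\<lambda>r. 1 / \<bar>deriv T r\<bar>) (\<Union>l\<in>{..<L}. P l b x)"
    by (simp add: preimage_cdf_def)
  also have "\<dots> = (\<Sum>l<L. w l b x)"
    unfolding w_def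
  proof (rule sum.UNION_disjoint)
    show "\<forall>i\<in>{..<L}. \<forall>j\<in>{..<L}. i \<noteq> j \<longrightarrow> P i b x \<inter> P j b x = {}"
      using I_disj by (auto simp: P_def)
  qed (use P_finite in auto)
  finally show ?thesis .
qed

definition inv :: "nat \<Rightarrow> real \<Rightarrow> real" where "inv l = the_inv_into (I l) T"

lemma w_if: assumes l: "l < L"
  shows "w l b x = (if x \<in> T ` (I l \<inter> {..b}) then 1 / \<bar>deriv T (inv l x)\<bar> else 0)"
proof (cases "x \<in> T ` (I l \<inter> {..b})")
  case True
  then obtain r where r: "r \<in> I l" "r \<le> b" "x = T r" by auto
  have "P l b x = {r}"
    using r inj_I[OF l] by (auto simp: P_def inj_on_def)
  moreover have "inv l x = r"
    using r inj_I[OF l] by (simp add: inv_def the_inv_into_f_f)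
  ultimately show ?thesis using True by (simp add: w_def)
next
  case False
  then have "P l b x = {}" by (auto simp: P_def)
  then show ?thesis using False by (simp add: w_def)
qed

lemma w_T: assumes l: "l < L" and r: "r \<in> I l"
  shows "w l b (T r) = (if r \<le> b then 1 / \<bar>deriv T r\<bar> else 0)"
proof -
  have "T r \<in> T ` (I l \<inter> {..b}) \<longleftrightarrow> r \<le> b"
    using r inj_I[OF l] by (auto simp: inj_on_def)
  moreover have "inv l (T r) = r"
    using r inj_I[OF l] by (simp add: inv_def the_inv_into_f_f)
  ultimately show ?thesis using w_if[OF l] by simp
qed

lemma w_nonneg: "w l b x \<ge> 0" by (simp add: w_def sum_nonneg)

lemma w_meas: assumes l: "l < L" shows "w l b \<in> borel_measurable borel"
proof -
  let ?E = "T ` (I l \<inter> {..b})"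
  have "is_interval (I l \<inter> {..b})" by (auto simp: I_def is_interval_def)
  moreover have "continuous_on (I l \<inter> {..b}) T"
    using deriv_I[OF l] by (meson DERIV_isCont Int_iff continuous_at_imp_continuous_on)
  ultimately have "connected ?E"
    by (intro connected_continuous_image) (auto simp: is_interval_connected)
  then have E: "?E \<in> sets borel"
    by (intro real_interval_borel_measurable) (simp add: is_interval_connected_1)
  have "continuous_on ?E (\<lambda>x. 1 / \<bar>deriv T (inv l x)\<bar>)"
  proof (intro continuous_at_imp_continuous_on ballI)
    fix y assume "y \<in> ?E"
    then obtain r where r: "r \<in> I l" "y = T r" by auto
    obtain d where d: "d > 0" "cball r d \<subseteq> I l"
      using I_open r(1) open_contains_cball by blast
    have "isCont (inv l) (T r)"
    proof (rule isCont_inverse_function[where f=T and x=r and g="inv l", OF d(1)])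
      fix z assume "\<bar>z - r\<bar> \<le> d"
      then have z: "z \<in> I l" using d by (auto simp: dist_real_def)
      then show "inv l (T z) = z" using inj_I[OF l] by (simp add: inv_def the_inv_into_f_f)
      show "isCont T z" using deriv_I[OF l z] by (rule DERIV_isCont)
    qed
    moreover have "isCont (deriv T) (inv l (T r))"
      using r inj_I[OF l] deriv_cont[OF l] I_open
      by (simp add: inv_def the_inv_into_f_f continuous_on_eq_continuous_at)
    ultimately have "isCont (\<lambda>x. deriv T (inv l x)) (T r)"
      by (rule isCont_o2)
    moreover have "deriv T (inv l (T r)) \<noteq> 0"
      using r inj_I[OF l] deriv_nz[OF l] by (simp add: inv_def the_inv_into_f_f)
    ultimately show "isCont (\<lambda>x. 1 / \<bar>deriv T (inv l x)\<bar>) y"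
      using r by (auto intro!: continuous_intros)
  qed
  then have "(\<lambda>x. if x \<in> ?E then 1 / \<bar>deriv T (inv l x)\<bar> else 0) \<in> borel_measurable borel"
    by (rule borel_measurable_continuous_on_if[OF E]) (auto intro: continuous_on_const)
  moreover have "w l b = (\<lambda>x. if x \<in> ?E then 1 / \<bar>deriv T (inv l x)\<bar> else 0)"
    using w_if[OF l] by (intro ext) simp
  ultimately show ?thesis by simp
qed

lemma G_meas: "(\<lambda>x. preimage_cdf T A x b) \<in> borel_measurable borel"
  unfolding G_split using w_meas by auto


lemma I_borel: "I l \<in> sets borel" by (simp add: I_def)

lemma piece: assumes l: "l < L"
  shows "(\<integral>\<^sup>+v. ennreal (w l b v * indicator {..c} v) \<partial>lborel) = emeasure lborel {r\<in>I l. r \<le> b \<and> T r \<le> c}"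
proof -
  define Q where "Q = {r\<in>I l. r \<le> b \<and> T r \<le> c}"
  have Qeq: "Q = I l \<inter> {..b} \<inter> ({0..1} \<inter> T -` {..c})" using I_sub[OF l] by (auto simp: Q_def)
  have Qm: "Q \<in> sets borel" unfolding Qeq using pre_meas[of "{..c}"] I_borel by auto
  have "emeasure lborel Q \<le> emeasure lborel {0..1::real}"
    by (intro emeasure_mono) (use I_sub[OF l] in \<open>auto simp: Q_def\<close>)
  then have Qle: "emeasure lborel Q \<le> 1" by simp
  then have Qfin: "emeasure lborel Q < \<infinity>"
    using order.strict_trans1[OF Qle ennreal_one_less_top] by simp
  define m where "m = measure lborel Q"
  have "((\<lambda>x. 1) has_integral m) Q" using has_integral_measure_lborel[OF Qm Qfin] m_def by simp
  then have hQ: "((\<lambda>x. if x \<in> Q then 1 else 0) has_integral m) (I l)"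
    using has_integral_restrict[of Q "I l" "\<lambda>x. 1" m] by (auto simp: Q_def)
  define f where "f v = w l b v * indicator {..c} v" for v
  have f_nonneg: "f v \<ge> 0" for v by (simp add: f_def w_nonneg)
  have eqI: "\<bar>deriv T x\<bar> * f (T x) = (if x \<in> Q then 1 else 0)" if x: "x \<in> I l" for x
    using w_T[OF l x, of b] deriv_nz[OF l x] x by (auto simp: f_def Q_def indicator_def)
  have hi: "((\<lambda>x. \<bar>deriv T x\<bar> * f (T x)) has_integral m) (I l)"
    using hQ eqI by (subst has_integral_cong) auto
  have ai: "(\<lambda>x. \<bar>deriv T x\<bar> * f (T x)) absolutely_integrable_on I l"
    by (rule nonnegative_absolutely_integrable_1) (use hi f_nonneg in auto)
  have "(\<lambda>x. \<bar>deriv T x\<bar> * f (T x)) absolutely_integrable_on I l \<and>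
           integral (I l) (\<lambda>x. \<bar>deriv T x\<bar> * f (T x)) = m"
    using ai hi by (simp add: integral_unique)
  then have "f absolutely_integrable_on (T ` I l) \<and> integral (T ` I l) f = m"
  proof (subst has_absolute_integral_change_of_variables_1'[symmetric])
    show "I l \<in> sets lebesgue" using I_borel by auto
    show "\<And>x. x \<in> I l \<Longrightarrow> (T has_field_derivative deriv T x) (at x within I l)"
      using deriv_I[OF l] by (auto intro: has_field_derivative_at_within)
    show "inj_on T (I l)" by (rule inj_I[OF l])
  qed
  then have "(f has_integral m) (T ` I l)"
    using absolutely_integrable_on_def integrable_integral by metis
  then have "integral\<^sup>N lborel (\<lambda>x. indicator (T ` I l) x * f x) = m"
    by (rule nn_integral_has_integral_lebesgue[rotated]) (simp add: f_nonneg)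
  moreover have "indicator (T ` I l) x * f x = f x" for x
  proof (cases "f x = 0")
    case False
    then have "w l b x \<noteq> 0" by (auto simp: f_def)
    then have "x \<in> T ` I l" using w_if[OF l, of b x] by (auto split: if_splits)
    then show ?thesis by simp
  qed simp
  ultimately have "(\<integral>\<^sup>+v. ennreal (f v) \<partial>lborel) = ennreal m" by simp
  also have "\<dots> = emeasure lborel Q"
    using Qfin by (simp add: m_def emeasure_eq_ennreal_measure)
  finally show ?thesis by (simp add: f_def Q_def)
qed


lemma cover: assumes x: "x \<in> {0..1}" "x \<notin> a ` {..L}" shows "x \<in> A"
proof -
  define K where "K = {k. k \<le> L \<and> a k < x}"
  have "0 \<in> K" using x a0 by (force simp: K_def)
  have fK: "finite K" by (simp add: K_def)
  define l where "l = Max K"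
  have lK: "l \<in> K" using fK \<open>0 \<in> K\<close> unfolding l_def by (metis Max_in empty_iff)
  have "l \<noteq> L" using lK aL x by (auto simp: K_def)
  then have lL: "l < L" using lK by (auto simp: K_def)
  have "Suc l \<notin> K" using fK l_def by (metis Max_ge Suc_n_not_le_n)
  then have "a (Suc l) \<ge> x" using lL by (auto simp: K_def)
  moreover have "a (Suc l) \<noteq> x" using x lL by auto
  ultimately have "x \<in> I l" using lK by (auto simp: I_def K_def)
  then show ?thesis using lL A_eq by auto
qed

lemma Q_meas: "l < L \<Longrightarrow> {r\<in>I l. r \<le> b \<and> T r \<le> c} \<in> sets borel"
proof -
  assume l: "l < L"
  have "{r\<in>I l. r \<le> b \<and> T r \<le> c} = I l \<inter> {..b} \<inter> ({0..1} \<inter> T -` {..c})"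
    using I_sub[OF l] by auto
  then show ?thesis using pre_meas[of "{..c}"] I_borel by auto
qed

lemma F5: "(\<integral>\<^sup>+v. ennreal (preimage_cdf T A v b) * indicator {..c} v \<partial>lborel)
    = emeasure lborel {u\<in>{0..1}. u \<le> b \<and> T u \<le> c}"
proof -
  have "(\<lambda>v. ennreal (preimage_cdf T A v b) * indicator {..c} v)
      = (\<lambda>v. \<Sum>l<L. ennreal (w l b v * indicator {..c} v))"
    by (intro ext) (auto simp: G_split sum_ennreal w_nonneg indicator_def)
  then have "(\<integral>\<^sup>+v. ennreal (preimage_cdf T A v b) * indicator {..c} v \<partial>lborel)
      = (\<integral>\<^sup>+v. (\<Sum>l<L. ennreal (w l b v * indicator {..c} v)) \<partial>lborel)" by simp
  also have "\<dots> = (\<Sum>l<L. \<integral>\<^sup>+v. ennreal (w l b v * indicator {..c} v) \<partial>lborel)"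
  proof (intro nn_integral_sum)
    fix l assume "l \<in> {..<L}"
    then have l: "l < L" by simp
    note w_meas[OF l, measurable]
    show "(\<lambda>v. ennreal (w l b v * indicator {..c} v)) \<in> borel_measurable lborel" by measurable
  qed
  also have "\<dots> = (\<Sum>l<L. emeasure lborel {r\<in>I l. r \<le> b \<and> T r \<le> c})"
    by (simp add: piece)
  also have "\<dots> = emeasure lborel (\<Union>l<L. {r\<in>I l. r \<le> b \<and> T r \<le> c})"
  proof (rule sum_emeasure)
    show "(\<lambda>l. {r\<in>I l. r \<le> b \<and> T r \<le> c}) ` {..<L} \<subseteq> sets lborel" using Q_meas by auto
    show "disjoint_family_on (\<lambda>l. {r\<in>I l. r \<le> b \<and> T r \<le> c}) {..<L}"
      using I_disj by (auto simp: disjoint_family_on_def)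
  qed simp
  also have "\<dots> = emeasure lborel {u\<in>{0..1}. u \<le> b \<and> T u \<le> c}"
  proof (rule emeasure_eq_AE)
    have "AE x in lborel. x \<notin> a ` {..L}"
      by (intro AE_not_in countable_imp_null_set_lborel) auto
    then show "AE x in lborel. (x \<in> (\<Union>l<L. {r\<in>I l. r \<le> b \<and> T r \<le> c})) = (x \<in> {u\<in>{0..1}. u \<le> b \<and> T u \<le> c})"
    proof (rule AE_mp, intro AE_I2 impI)
      fix x assume x: "x \<notin> a ` {..L}"
      show "(x \<in> (\<Union>l<L. {r\<in>I l. r \<le> b \<and> T r \<le> c})) = (x \<in> {u\<in>{0..1}. u \<le> b \<and> T u \<le> c})"
      proof
        assume "x \<in> (\<Union>l<L. {r\<in>I l. r \<le> b \<and> T r \<le> c})"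
        then obtain l where "l < L" "x \<in> I l" "x \<le> b" "T x \<le> c" by auto
        then show "x \<in> {u\<in>{0..1}. u \<le> b \<and> T u \<le> c}" using I_sub[of l] by auto
      next
        assume x01: "x \<in> {u\<in>{0..1}. u \<le> b \<and> T u \<le> c}"
        then have "x \<in> A" using cover[OF _ x] by auto
        then obtain l where "l < L" "x \<in> I l" using A_eq by auto
        then show "x \<in> (\<Union>l<L. {r\<in>I l. r \<le> b \<and> T r \<le> c})" using x01 by auto
      qed
    qed
    show "(\<Union>l<L. {r\<in>I l. r \<le> b \<and> T r \<le> c}) \<in> sets lborel" using Q_meas by auto
    have "{u\<in>{0..1}. u \<le> b \<and> T u \<le> c} = {..b} \<inter> ({0..1} \<inter> T -` {..c})" by auto
    then show "{u\<in>{0..1}. u \<le> b \<and> T u \<le> c} \<in> sets lborel" using pre_meas[of "{..c}"] by auto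
  qed
  finally show ?thesis .
qed

lemma G_nonneg: "preimage_cdf T A x b \<ge> 0"
  by (simp add: preimage_cdf_def sum_nonneg)

lemma R_finite: "finite {r\<in>A. T r = x}"
proof -
  have "r \<le> 1" if "r \<in> I l" "l < L" for r l using I_sub that by force
  then have "{r\<in>A. T r = x} = (\<Union>l<L. P l 1 x)" by (auto simp: A_eq P_def)
  then show ?thesis using P_finite by auto
qed

lemma F4: "AE x in lborel. x \<in> {0..1} \<longrightarrow> preimage_cdf T A x 1 = 1"
proof -
  have eqc: "emeasure (density lborel (\<lambda>v. ennreal (preimage_cdf T A v 1))) {..c}
        = emeasure lborel ({0..1} \<inter> {..c})" for c :: real
  proof -
    have "emeasure (density lborel (\<lambda>v. ennreal (preimage_cdf T A v 1))) {..c}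
        = (\<integral>\<^sup>+v. ennreal (preimage_cdf T A v 1) * indicator {..c} v \<partial>lborel)"
      using G_meas by (intro emeasure_density) auto
    also have "\<dots> = emeasure lborel {u\<in>{0..1}. u \<le> 1 \<and> T u \<le> c}" by (rule F5)
    also have "{u\<in>{0..1}. u \<le> 1 \<and> T u \<le> c} = {0..1} \<inter> T -` {..c}" by auto
    also have "emeasure lborel \<dots> = emeasure lborel ({0..1} \<inter> {..c})" by (intro U1) auto
    finally show ?thesis .
  qed
  have eqc2: "emeasure (density lborel (indicator {0..1})) {..c}
        = emeasure lborel ({0..1} \<inter> {..c})" for c :: real
  proof -
    have "emeasure (density lborel (indicator {0..1})) {..c}
        = (\<integral>\<^sup>+v. indicator {0..1} v * indicator {..c} v \<partial>lborel)"
      by (intro emeasure_density) auto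
    also have "\<dots> = (\<integral>\<^sup>+v. indicator ({0..1} \<inter> {..c}) v \<partial>lborel)"
      by (simp only: indicator_inter_arith)
    also have "\<dots> = emeasure lborel ({0..1} \<inter> {..c})"
      by (intro nn_integral_indicator) auto
    finally show ?thesis .
  qed
  have fin: "emeasure lborel ({0..1} \<inter> {..c::real}) \<noteq> \<infinity>" for c
  proof -
    have "emeasure lborel ({0..1} \<inter> {..c}) \<le> emeasure lborel {0..1::real}"
      by (intro emeasure_mono) auto
    then show ?thesis by (auto simp: top_unique)
  qed
  have "density lborel (\<lambda>v. ennreal (preimage_cdf T A v 1)) = density lborel (indicator {0..1})"
    by (rule measure_eq_atMost) (simp_all only: eqc eqc2 fin sets_density sets_lborel not_False_eq_True)
  moreover have "(\<lambda>v. ennreal (preimage_cdf T A v 1)) \<in> borel_measurable lborel"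
    using G_meas[of 1] by simp
  ultimately have "AE x in lborel. ennreal (preimage_cdf T A x 1) = indicator {0..1} x"
    using sigma_finite_measure.density_unique_iff[OF sigma_finite_lborel, of "\<lambda>v. ennreal (preimage_cdf T A v 1)" "indicator {0..1}"]
    by simp
  then show ?thesis
  proof (rule AE_mp, intro AE_I2 impI)
    fix x :: real assume "ennreal (preimage_cdf T A x 1) = indicator {0..1} x" "x \<in> {0..1}"
    then show "preimage_cdf T A x 1 = 1" by simp
  qed
qed

lemma G_alt: "preimage_cdf T A x t = (\<Sum>r\<in>{r\<in>{r\<in>A. T r = x}. r \<le> t}. 1 / \<bar>deriv T r\<bar>)"
  unfolding preimage_cdf_def by (rule sum.cong) auto

lemma wt_pos: "r \<in> A \<Longrightarrow> 1 / \<bar>deriv T r\<bar> > 0"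
  using deriv_nz A_eq by auto

lemma Rt_finite: "finite {r\<in>{r\<in>A. T r = x}. r \<le> t}"
  by (rule finite_subset[OF _ R_finite[of x]]) auto

lemma G_mono: "s \<le> t \<Longrightarrow> preimage_cdf T A x s \<le> preimage_cdf T A x t"
  unfolding G_alt
  by (rule sum_mono2[OF Rt_finite]) (auto intro: less_imp_le wt_pos)

lemma R_le1: "{r\<in>{r\<in>A. T r = x}. r \<le> 1} = {r\<in>A. T r = x}"
  using A_sub by auto

lemma G_le1: "preimage_cdf T A x t \<le> preimage_cdf T A x 1"
  unfolding G_alt
  by (rule sum_mono2[OF Rt_finite]) (use A_sub in \<open>auto intro: less_imp_le wt_pos\<close>)

lemma TA_iff: "x \<in> T ` A \<longleftrightarrow> 0 < preimage_cdf T A x 1"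
proof
  assume "x \<in> T ` A"
  then obtain r where r: "r \<in> A" "T r = x" by auto
  show "0 < preimage_cdf T A x 1"
    unfolding G_alt R_le1 using R_finite r wt_pos
    by (intro sum_pos2[of _ r]) (auto intro: less_imp_le)
next
  assume "0 < preimage_cdf T A x 1"
  show "x \<in> T ` A"
  proof (rule ccontr)
    assume "x \<notin> T ` A"
    then have "{r\<in>{r\<in>A. T r = x}. r \<le> 1} = {}" by auto
    then have "preimage_cdf T A x 1 = 0" by (simp only: G_alt sum.empty)
    then show False using \<open>0 < preimage_cdf T A x 1\<close> by simp
  qed
qed

lemma galois: assumes z: "0 < z" "z \<le> preimage_cdf T A x 1"
  shows "stoch_inv T A x z \<le> b \<longleftrightarrow> z \<le> preimage_cdf T A x b"
proof -
  define R where "R = {r\<in>A. T r = x}"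
  define G where "G t = preimage_cdf T A x t" for t
  have fin: "finite R" using R_finite by (simp add: R_def)
  have Gt: "G t = (\<Sum>r\<in>{r\<in>R. r \<le> t}. 1 / \<bar>deriv T r\<bar>)" for t
    unfolding G_def G_alt R_def ..
  have G1: "G 1 = (\<Sum>r\<in>R. 1 / \<bar>deriv T r\<bar>)"
    unfolding Gt using R_le1 R_def by simp
  have xTA: "x \<in> T ` A" using TA_iff z by auto
  then have Rne: "R \<noteq> {}" by (auto simp: R_def)
  define R' where "R' = {r\<in>R. z \<le> G r}"
  have "{r\<in>R. r \<le> Max R} = R" using fin Rne by auto
  then have "G (Max R) = G 1" using Gt G1 by simp
  then have "Max R \<in> R'" using z fin Rne by (auto simp: R'_def G_def)
  then have R'ne: "R' \<noteq> {}" and finR': "finite R'" using fin by (auto simp: R'_def)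
  define m where "m = Min R'"
  have mR': "m \<in> R'" using R'ne finR' by (simp add: m_def)
  have S: "{t. z \<le> G t} = {m..}"
  proof (intro set_eqI iffI)
    fix t assume "t \<in> {m..}"
    then have "G m \<le> G t" unfolding G_def by (intro G_mono) auto
    then show "t \<in> {t. z \<le> G t}" using mR' by (auto simp: R'_def)
  next
    fix t assume t: "t \<in> {t. z \<le> G t}"
    show "t \<in> {m..}"
    proof (rule ccontr)
      assume "t \<notin> {m..}"
      then have tm: "t < m" by simp
      show False
      proof (cases "{r\<in>R. r \<le> t} = {}")
        case True
        then have "G t = 0" by (simp only: Gt sum.empty)
        then show False using t z by simp
      next
        case False
        define r0 where "r0 = Max {r\<in>R. r \<le> t}"
        have fin2: "finite {r\<in>R. r \<le> t}" using fin by simp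
        have r0: "r0 \<in> R" "r0 \<le> t" using Max_in[OF fin2 False] by (auto simp: r0_def)
        have "{r\<in>R. r \<le> r0} = {r\<in>R. r \<le> t}"
          using r0 fin2 by (auto simp: r0_def)
        then have "G r0 = G t" using Gt by simp
        then have "r0 \<in> R'" using r0 t by (auto simp: R'_def)
        then have "m \<le> r0" using finR' by (simp add: m_def)
        then show False using r0 tm by simp
      qed
    qed
  qed
  have "stoch_inv T A x z = m"
    using xTA S by (simp add: stoch_inv_def gen_inv_def G_def)
  then show ?thesis using S by (auto simp: G_def)
qed

lemma stoch_le0: "x \<in> T ` A \<Longrightarrow> z \<le> 0 \<Longrightarrow> stoch_inv T A x z = Inf UNIV"
proof -
  assume "x \<in> T ` A" "z \<le> 0"
  moreover have "{t. z \<le> preimage_cdf T A x t} = UNIV"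
    using \<open>z \<le> 0\<close> G_nonneg order_trans by blast
  ultimately show ?thesis by (simp add: stoch_inv_def gen_inv_def)
qed

lemma stoch_gt: "x \<in> T ` A \<Longrightarrow> preimage_cdf T A x 1 < z \<Longrightarrow> stoch_inv T A x z = Inf {}"
proof -
  assume "x \<in> T ` A" "preimage_cdf T A x 1 < z"
  moreover have "{t. z \<le> preimage_cdf T A x t} = {}"
  proof -
    have "\<not> z \<le> preimage_cdf T A x t" for t
      using \<open>preimage_cdf T A x 1 < z\<close> G_le1[of x t] by linarith
    then show ?thesis by blast
  qed
  ultimately show ?thesis by (simp add: stoch_inv_def gen_inv_def)
qed

lemma stoch_notin: "x \<notin> T ` A \<Longrightarrow> stoch_inv T A x z = 0"
  by (simp add: stoch_inv_def)

lemma stoch_meas: "(\<lambda>p. stoch_inv T A (fst p) (snd p)) \<in> borel_measurable borel"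
proof (rule borel_measurableI_le)
  fix b :: real
  note G_meas[measurable]
  let ?G = "\<lambda>x t. preimage_cdf T A x t"
  have "{w \<in> space borel. stoch_inv T A (fst w) (snd w) \<le> b}
    = {p. \<not> 0 < ?G (fst p) 1 \<and> 0 \<le> b}
      \<union> {p. 0 < ?G (fst p) 1 \<and> snd p \<le> 0 \<and> Inf (UNIV::real set) \<le> b}
      \<union> {p. 0 < ?G (fst p) 1 \<and> ?G (fst p) 1 < snd p \<and> Inf ({}::real set) \<le> b}
      \<union> {p. 0 < snd p \<and> snd p \<le> ?G (fst p) 1 \<and> snd p \<le> ?G (fst p) b}" (is "?L = ?R")
  proof (intro set_eqI iffI)
    fix p :: "real \<times> real"
    obtain x z where p: "p = (x, z)" by (cases p)
    assume "p \<in> ?L"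
    then have le: "stoch_inv T A x z \<le> b" by (simp add: p)
    consider "\<not> 0 < ?G x 1" | "0 < ?G x 1" "z \<le> 0" | "0 < ?G x 1" "?G x 1 < z" | "0 < z" "z \<le> ?G x 1"
      by linarith
    then show "p \<in> ?R"
    proof cases
      case 1 then show ?thesis using le stoch_notin TA_iff by (simp add: p)
    next
      case 2 then show ?thesis using le stoch_le0 TA_iff by (simp add: p)
    next
      case 3 then show ?thesis using le stoch_gt TA_iff by (simp add: p)
    next
      case 4 then show ?thesis using le galois by (simp add: p)
    qed
  next
    fix p :: "real \<times> real"
    obtain x z where p: "p = (x, z)" by (cases p)
    assume "p \<in> ?R"
    then consider "\<not> 0 < ?G x 1" "0 \<le> b" | "0 < ?G x 1" "z \<le> 0" "Inf (UNIV::real set) \<le> b"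
      | "0 < ?G x 1" "?G x 1 < z" "Inf ({}::real set) \<le> b"
      | "0 < z" "z \<le> ?G x 1" "z \<le> ?G x b"
      unfolding p by auto
    then have "stoch_inv T A x z \<le> b"
    proof cases
      case 1 then show ?thesis using stoch_notin TA_iff by simp
    next
      case 2 then show ?thesis using stoch_le0 TA_iff by simp
    next
      case 3 then show ?thesis using stoch_gt TA_iff by simp
    next
      case 4 then show ?thesis using galois by simp
    qed
    then show "p \<in> ?L" by (simp add: p)
  qed
  have "Measurable.pred (borel \<Otimes>\<^sub>M borel) (\<lambda>p. p \<in> ?R)"
    unfolding Un_iff mem_Collect_eq by measurable
  then have "{p \<in> space (borel \<Otimes>\<^sub>M borel). p \<in> ?R} \<in> sets (borel \<Otimes>\<^sub>M borel)"
    by (simp only: pred_def)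
  then have "?R \<in> sets borel" by (simp only: borel_prod space_borel UNIV_I simp_thms Collect_mem_eq)
  moreover note \<open>?L = ?R\<close>
  ultimately show "{w \<in> space borel. stoch_inv T A (fst w) (snd w) \<le> b} \<in> sets borel" by simp
qed


end

theorem theorem3:
  fixes M :: "'a measure"
    and V Z :: "'a \<Rightarrow> real^'d"
    and cstar :: "real^'d \<Rightarrow> ennreal"
    and T :: "'d \<Rightarrow> real \<Rightarrow> real"
    and a :: "'d \<Rightarrow> nat \<Rightarrow> real"
    and L :: "'d \<Rightarrow> nat"
  assumes "prob_space M"
    and V_copula: "distributed M lborel V cstar"
    and V_unif: "\<And>i. distributed M lborel (\<lambda>\<omega>. V \<omega> $ i) (indicator {0..1})"
    and Z_unif: "\<And>i. distributed M lborel (\<lambda>\<omega>. Z \<omega> $ i) (indicator {0..1})"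
    and Z_indep: "prob_space.indep_vars M (\<lambda>_. borel) (\<lambda>i \<omega>. Z \<omega> $ i) UNIV"
    and VZ_indep: "prob_space.indep_var M borel V borel Z"
    and T_reg: "\<And>i. regular_udp (T i) (a i) (L i)"
  shows "distributed M lborel
           (\<lambda>\<omega>. \<chi> i. stoch_inv (T i) (partition_set (a i) (L i)) (V \<omega> $ i) (Z \<omega> $ i))
           (\<lambda>u. indicator unit_cube u * cstar (\<chi> i. T i (u $ i)))"
proof -
  interpret prob_space M by fact
  have R: "\<And>i. rudp (T i) (a i) (L i)" using T_reg by (simp add: rudp_def)
  define A where "A i = partition_set (a i) (L i)" for i
  define G where "G i x t = preimage_cdf (T i) (A i) x t" for i x t
  define X where "X \<omega> = (\<chi> i. stoch_inv (T i) (A i) (V \<omega> $ i) (Z \<omega> $ i))" for \<omega>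
  define Tt where "Tt i x = T i x * indicator {0..1} x" for i x
  define Tv where "Tv u = (\<chi> i. Tt i (u$i))" for u :: "real^'d"
  define f where "f u = indicator unit_cube u * cstar (\<chi> i. T i (u $ i))" for u :: "real^'d"
  define H where "H b v = (\<Prod>i\<in>UNIV. ennreal (G i (v$i) (b$i)))" for b v :: "real^'d"
  define \<Phi> where "\<Phi> b = (\<integral>\<^sup>+v. cstar v * H b v \<partial>lborel)" for b

  have Gm[measurable]: "(\<lambda>x. G i x t) \<in> borel_measurable borel" for i t
    unfolding G_def A_def by (rule rudp.G_meas[OF R])
  have Vm[measurable]: "V \<in> borel_measurable M"
    using distributed_measurable[OF V_copula] by simp
  have Vim[measurable]: "(\<lambda>\<omega>. V \<omega> $ i) \<in> borel_measurable M" for i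
    using distributed_measurable[OF V_unif] by simp
  have Zim[measurable]: "(\<lambda>\<omega>. Z \<omega> $ i) \<in> borel_measurable M" for i
    using distributed_measurable[OF Z_unif] by simp
  have Zm[measurable]: "Z \<in> borel_measurable M"
    by (rule vec_meas) simp
  have Xm: "X \<in> borel_measurable M"
  proof (rule vec_meas)
    fix i
    have "(\<lambda>\<omega>. (\<lambda>p. stoch_inv (T i) (A i) (fst p) (snd p)) (V \<omega> $ i, Z \<omega> $ i)) \<in> borel_measurable M"
      by (rule measurable_compose[OF borel_measurable_Pair[OF Vim Zim]])
         (unfold A_def, rule rudp.stoch_meas[OF R])
    then show "(\<lambda>\<omega>. X \<omega> $ i) \<in> borel_measurable M" by (simp add: X_def)
  qed
  have Ttm[measurable]: "Tt i \<in> borel_measurable borel" for i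
  proof -
    have "(\<lambda>x. indicator {0..1} x *\<^sub>R T i x) \<in> borel_measurable lborel"
      using rudp.T_meas[OF R] by (subst (asm) borel_measurable_restrict_space_iff) auto
    then show ?thesis by (simp add: Tt_def[abs_def] mult.commute)
  qed
  have Tvm[measurable]: "Tv \<in> borel_measurable borel"
    unfolding Tv_def by (rule vec_meas) simp
  have cm[measurable]: "cstar \<in> borel_measurable borel"
    using distributed_borel_measurable[OF V_copula] by simp
  have cube: "unit_cube = {0..(1::real^'d)}"
    by (auto simp: unit_cube_def less_eq_vec_def)
  have f_eq: "f u = indicator {0..1} u * cstar (Tv u)" for u
  proof (cases "u \<in> unit_cube")
    case True
    then have "Tv u = (\<chi> i. T i (u $ i))"
      by (simp add: Tv_def Tt_def unit_cube_def vec_eq_iff)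
    then show ?thesis using True cube by (simp add: f_def)
  next
    case False
    then show ?thesis using cube by (simp add: f_def)
  qed
  have fm: "f \<in> borel_measurable lborel"
    unfolding f_eq[abs_def] by simp
  have Hm[measurable]: "H b \<in> borel_measurable borel" for b unfolding H_def by measurable
  have Zdens: "emeasure M ((\<lambda>\<omega>. Z \<omega> $ i) -` {..c} \<inter> space M) = emeasure lborel ({0..1} \<inter> {..c})" for i c
  proof -
    have "emeasure M ((\<lambda>\<omega>. Z \<omega> $ i) -` {..c} \<inter> space M)
        = (\<integral>\<^sup>+x. indicator {0..1} x * indicator {..c} x \<partial>lborel)"
      by (rule distributed_emeasure[OF Z_unif]) simp
    also have "\<dots> = (\<integral>\<^sup>+x. indicator ({0..1} \<inter> {..c}) x \<partial>lborel)"
      by (simp only: indicator_inter_arith)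
    also have "\<dots> = emeasure lborel ({0..1} \<inter> {..c})"
      by (intro nn_integral_indicator) auto
    finally show ?thesis .
  qed
  have PZ: "emeasure (distr M borel Z) {..cv} = (\<Prod>i\<in>UNIV. emeasure lborel ({0..1} \<inter> {..cv$i}))" for cv :: "real^'d"
  proof -
    have "emeasure (distr M borel Z) {..cv} = emeasure M (Z -` {..cv} \<inter> space M)"
      by (rule emeasure_distr) auto
    also have "Z -` {..cv} \<inter> space M = (\<Inter>i\<in>UNIV. (\<lambda>\<omega>. Z \<omega> $ i) -` {..cv$i} \<inter> space M)"
      by (auto simp: less_eq_vec_def)
    also have "emeasure M \<dots> = ennreal (prob (\<Inter>i\<in>UNIV. (\<lambda>\<omega>. Z \<omega> $ i) -` {..cv$i} \<inter> space M))"
      by (simp add: emeasure_eq_measure)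
    also have "prob (\<Inter>i\<in>UNIV. (\<lambda>\<omega>. Z \<omega> $ i) -` {..cv$i} \<inter> space M)
        = (\<Prod>i\<in>UNIV. prob ((\<lambda>\<omega>. Z \<omega> $ i) -` {..cv$i} \<inter> space M))"
    proof -
      have ind: "indep_sets (\<lambda>i. {(\<lambda>\<omega>. Z \<omega> $ i) -` A \<inter> space M | A. A \<in> sets borel}) UNIV"
        using Z_indep unfolding indep_vars_def2 by simp
      have "{..cv$j} \<in> sets borel" for j by simp
      then have mem: "\<forall>j\<in>UNIV. (\<lambda>\<omega>. Z \<omega> $ j) -` {..cv$j} \<inter> space M \<in> {(\<lambda>\<omega>. Z \<omega> $ j) -` A \<inter> space M | A. A \<in> sets borel}"
        by blast
      show ?thesis using indep_setsD[OF ind subset_refl UNIV_not_empty finite_class.finite_UNIV mem] by simp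
    qed
    also have "ennreal \<dots> = (\<Prod>i\<in>UNIV. ennreal (prob ((\<lambda>\<omega>. Z \<omega> $ i) -` {..cv$i} \<inter> space M)))"
      by (simp add: prod_ennreal)
    also have "\<dots> = (\<Prod>i\<in>UNIV. emeasure lborel ({0..1} \<inter> {..cv$i}))"
      by (intro prod.cong refl) (simp add: emeasure_eq_measure[symmetric] Zdens)
    finally show ?thesis .
  qed
  define good where "good i x \<longleftrightarrow> x \<in> {0..1} \<and> G i x 1 = 1" for i x
  have goodm[measurable]: "Measurable.pred borel (good i)" for i
    unfolding good_def by measurable
  have AEV: "AE \<omega> in M. \<forall>i. good i (V \<omega> $ i)"
  proof -
    have "AE \<omega> in M. \<forall>i\<in>UNIV. good i (V \<omega> $ i)"
    proof (rule AE_finite_allI[OF finite_class.finite_UNIV])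
      fix i
      have "AE x in lborel. x \<in> {0..1} \<longrightarrow> G i x 1 = 1"
        unfolding G_def A_def by (rule rudp.F4[OF R])
      then have "AE x in lborel. 0 < (indicator {0..1} x :: ennreal) \<longrightarrow> good i x"
        by (rule AE_mp) (intro AE_I2, auto simp: good_def indicator_def)
      then have "AE x in density lborel (indicator {0..1}). good i x"
        by (subst AE_density) auto
      moreover have deq: "distr M lborel (\<lambda>\<omega>. V \<omega> $ i) = density lborel (indicator {0..1})"
        by (rule distributed_distr_eq_density[OF V_unif[of i]])
      ultimately have "AE x in distr M lborel (\<lambda>\<omega>. V \<omega> $ i). good i x"
        by (simp only: deq)
      then show "AE \<omega> in M. good i (V \<omega> $ i)"
        by (subst (asm) AE_distr_iff) auto
    qed
    then show ?thesis by simp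
  qed
  have AEZ: "AE \<omega> in M. \<forall>i. Z \<omega> $ i \<in> {0<..1}"
  proof -
    have "AE \<omega> in M. \<forall>i\<in>UNIV. Z \<omega> $ i \<in> {0<..1}"
    proof (rule AE_finite_allI[OF finite_class.finite_UNIV])
      fix i
      have "AE x in lborel. x \<noteq> (0::real)" by (rule AE_lborel_singleton)
      then have "AE x in lborel. 0 < (indicator {0..1} x :: ennreal) \<longrightarrow> x \<in> {0<..1::real}"
        by (rule AE_mp) (intro AE_I2, auto simp: indicator_def)
      then have "AE x in density lborel (indicator {0..1}). x \<in> {0<..1::real}"
        by (subst AE_density) auto
      moreover have deq: "distr M lborel (\<lambda>\<omega>. Z \<omega> $ i) = density lborel (indicator {0..1})"
        by (rule distributed_distr_eq_density[OF Z_unif[of i]])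
      ultimately have "AE x in distr M lborel (\<lambda>\<omega>. Z \<omega> $ i). x \<in> {0<..1}"
        by (simp only: deq)
      then show "AE \<omega> in M. Z \<omega> $ i \<in> {0<..1}"
        by (subst (asm) AE_distr_iff) auto
    qed
    then show ?thesis by simp
  qed
  have P1: "emeasure (distr M lborel X) {..b} = \<Phi> b" for b
  proof -
    have key: "AE \<omega> in M. (\<omega> \<in> X -` {..b} \<inter> space M) \<longleftrightarrow>
        (\<omega> \<in> {\<omega>\<in>space M. \<forall>i. Z \<omega> $ i \<le> G i (V \<omega> $ i) (b$i)})"
      using AEV AEZ
    proof (rule AE_mp[OF AE_conjI], intro AE_I2 impI)
      fix \<omega> assume "(\<forall>i. good i (V \<omega> $ i)) \<and> (\<forall>i. Z \<omega> $ i \<in> {0<..1})"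
      then have g: "good i (V \<omega> $ i)" "Z \<omega> $ i \<in> {0<..1}" for i by auto
      have "X \<omega> $ i \<le> b $ i \<longleftrightarrow> Z \<omega> $ i \<le> G i (V \<omega> $ i) (b$i)" for i
        using rudp.galois[OF R[of i], of "Z \<omega> $ i" "V \<omega> $ i" "b$i"] g[of i]
        by (simp add: X_def G_def A_def good_def)
      then show "(\<omega> \<in> X -` {..b} \<inter> space M) \<longleftrightarrow>
        (\<omega> \<in> {\<omega>\<in>space M. \<forall>i. Z \<omega> $ i \<le> G i (V \<omega> $ i) (b$i)})"
        by (auto simp: less_eq_vec_def)
    qed
    define Qb where "Qb = {p :: (real^'d) \<times> (real^'d). \<forall>i. snd p $ i \<le> G i (fst p $ i) (b$i)}"
    have fstm[measurable]: "(\<lambda>p::(real^'d)\<times>(real^'d). fst p $ i) \<in> borel_measurable (borel \<Otimes>\<^sub>M borel)" for i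
      by (rule measurable_compose[OF measurable_fst]) simp
    have sndm[measurable]: "(\<lambda>p::(real^'d)\<times>(real^'d). snd p $ i) \<in> borel_measurable (borel \<Otimes>\<^sub>M borel)" for i
      by (rule measurable_compose[OF measurable_snd]) simp
    have "Measurable.pred (borel \<Otimes>\<^sub>M borel) (\<lambda>p :: (real^'d) \<times> (real^'d). \<forall>i\<in>UNIV. snd p $ i \<le> G i (fst p $ i) (b$i))"
      by (rule pred_intros_finite(3)[OF finite_class.finite_UNIV]) measurable
    then have Qbm: "Qb \<in> sets (borel \<Otimes>\<^sub>M borel)"
      unfolding pred_def Qb_def by (simp add: space_pair_measure)
    have "emeasure (distr M lborel X) {..b} = emeasure M (X -` {..b} \<inter> space M)"
      by (rule emeasure_distr) (use Xm in auto)
    also have "\<dots> = emeasure M {\<omega>\<in>space M. \<forall>i. Z \<omega> $ i \<le> G i (V \<omega> $ i) (b$i)}"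
    proof (rule emeasure_eq_AE[OF key])
      show "X -` {..b} \<inter> space M \<in> sets M" using measurable_sets[OF Xm, of "{..b}"] by simp
      have "Measurable.pred M (\<lambda>\<omega>. \<forall>i\<in>UNIV. Z \<omega> $ i \<le> G i (V \<omega> $ i) (b $ i))"
        by (rule pred_intros_finite(3)[OF finite_class.finite_UNIV]) measurable
      then show "{\<omega> \<in> space M. \<forall>i. Z \<omega> $ i \<le> G i (V \<omega> $ i) (b $ i)} \<in> sets M"
        by (simp add: pred_def)
    qed
    also have "{\<omega>\<in>space M. \<forall>i. Z \<omega> $ i \<le> G i (V \<omega> $ i) (b$i)} = (\<lambda>\<omega>. (V \<omega>, Z \<omega>)) -` Qb \<inter> space M"
      by (auto simp: Qb_def)
    also have "emeasure M \<dots> = emeasure (distr M (borel \<Otimes>\<^sub>M borel) (\<lambda>\<omega>. (V \<omega>, Z \<omega>))) Qb"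
      by (rule emeasure_distr[symmetric]) (auto simp: Qbm)
    also have "distr M (borel \<Otimes>\<^sub>M borel) (\<lambda>\<omega>. (V \<omega>, Z \<omega>)) = distr M borel V \<Otimes>\<^sub>M distr M borel Z"
      using indep_var_distribution_eq[THEN iffD1, OF VZ_indep] by simp
    also have "emeasure (distr M borel V \<Otimes>\<^sub>M distr M borel Z) Qb
        = (\<integral>\<^sup>+v. emeasure (distr M borel Z) (Pair v -` Qb) \<partial>distr M borel V)"
    proof -
      interpret PZ: prob_space "distr M borel Z" by (rule prob_space_distr) simp
      show ?thesis by (rule PZ.emeasure_pair_measure_alt) (use Qbm in simp)
    qed
    also have "\<dots> = (\<integral>\<^sup>+v. H b v \<partial>distr M borel V)"
    proof (rule nn_integral_cong_AE)
      have "AE v in distr M borel V. \<forall>i. good i (v $ i)"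
        using AEV by (subst AE_distr_iff) auto
      then show "AE v in distr M borel V. emeasure (distr M borel Z) (Pair v -` Qb) = H b v"
      proof (rule AE_mp, intro AE_I2 impI)
        fix v :: "real^'d" assume g: "\<forall>i. good i (v $ i)"
        have "Pair v -` Qb = {..(\<chi> i. G i (v$i) (b$i))}"
          by (auto simp: Qb_def less_eq_vec_def)
        then have "emeasure (distr M borel Z) (Pair v -` Qb)
            = (\<Prod>i\<in>UNIV. emeasure lborel ({0..1} \<inter> {..G i (v$i) (b$i)}))"
          by (simp add: PZ)
        also have "\<dots> = H b v" unfolding H_def
        proof (intro prod.cong refl)
          fix i
          have g0: "0 \<le> G i (v$i) (b$i)" unfolding G_def A_def by (rule rudp.G_nonneg[OF R])
          have "G i (v$i) (b$i) \<le> G i (v$i) 1" unfolding G_def A_def by (rule rudp.G_le1[OF R])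
          then have g1: "G i (v$i) (b$i) \<le> 1" using g by (simp add: good_def)
          then have "{0..1} \<inter> {..G i (v$i) (b$i)} = {0..G i (v$i) (b$i)}" by auto
          then show "emeasure lborel ({0..1} \<inter> {..G i (v$i) (b$i)}) = ennreal (G i (v$i) (b$i))"
            using g0 by simp
        qed
        finally show "emeasure (distr M borel Z) (Pair v -` Qb) = H b v" .
      qed
    qed
    also have "\<dots> = (\<integral>\<^sup>+\<omega>. H b (V \<omega>) \<partial>M)"
      by (rule nn_integral_distr) auto
    also have "\<dots> = \<Phi> b"
      using distributed_nn_integral[OF V_copula, of "H b"] by (simp add: \<Phi>_def)
    finally show ?thesis .
  qed
  have P2: "emeasure (density lborel f) {..b} = \<Phi> b" for b
  proof -
    define D where "D u = (\<Prod>i\<in>UNIV. indicator ({0..1} \<inter> {..b$i}) (u$i) :: ennreal)" for u :: "real^'d"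
    have Dm[measurable]: "D \<in> borel_measurable borel" unfolding D_def by measurable
    have Hm[measurable]: "H b \<in> borel_measurable borel" unfolding H_def by measurable
    have D_ind: "D u = indicator ({0..1} \<inter> {..b}) u" for u
      unfolding D_def prod_indicator_vec
      by (auto simp: indicator_def less_eq_vec_def)
    have fD: "f u * indicator {..b} u = D u * cstar (Tv u)" for u
      unfolding f_eq D_ind by (simp add: indicator_def)
    have "emeasure (density lborel f) {..b} = (\<integral>\<^sup>+u. f u * indicator {..b} u \<partial>lborel)"
      using fm by (intro emeasure_density) auto
    also have "\<dots> = (\<integral>\<^sup>+u. D u * cstar (Tv u) \<partial>lborel)" by (simp add: fD)
    also have "\<dots> = (\<integral>\<^sup>+u. cstar (Tv u) \<partial>density lborel D)"
      by (subst nn_integral_density) auto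
    also have "\<dots> = (\<integral>\<^sup>+v. cstar v \<partial>distr (density lborel D) lborel Tv)"
      by (subst nn_integral_distr) auto
    also have "distr (density lborel D) lborel Tv = density lborel (H b)"
    proof (rule measure_eq_atMost)
      fix c :: "real^'d"
      define E where "E i = emeasure lborel {x\<in>{0..1}. x \<le> b$i \<and> T i x \<le> c$i}" for i
      have Sm: "{x\<in>{0..1}. x \<le> s \<and> T i x \<le> t} \<in> sets borel" for i s t
      proof -
        have "{x\<in>{0..1}. x \<le> s \<and> T i x \<le> t} = {..s} \<inter> ({0..1} \<inter> T i -` {..t})" by auto
        then show ?thesis using rudp.pre_meas[OF R, of "{..t}" i] by auto
      qed
      have "emeasure (distr (density lborel D) lborel Tv) {..c}
          = emeasure (density lborel D) (Tv -` {..c} \<inter> space (density lborel D))"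
        by (rule emeasure_distr) auto
      also have "\<dots> = (\<integral>\<^sup>+u. D u * indicator (Tv -` {..c}) u \<partial>lborel)"
      proof -
        have "Tv -` {..c} \<in> sets borel" using measurable_sets[OF Tvm, of "{..c}"] by simp
        then show ?thesis by (subst emeasure_density) auto
      qed
      also have "\<dots> = (\<integral>\<^sup>+u. (\<Prod>i\<in>UNIV. indicator {x\<in>{0..1}. x \<le> b$i \<and> T i x \<le> c$i} (u$i)) \<partial>lborel)"
      proof (intro nn_integral_cong)
        fix u :: "real^'d"
        have "(u \<in> {0..1} \<and> u \<le> b) \<and> Tv u \<le> c \<longleftrightarrow> (\<forall>i. u$i \<in> {x\<in>{0..1}. x \<le> b$i \<and> T i x \<le> c$i})"
          by (auto simp: less_eq_vec_def Tv_def Tt_def)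
        then show "D u * indicator (Tv -` {..c}) u
            = (\<Prod>i\<in>UNIV. indicator {x\<in>{0..1}. x \<le> b$i \<and> T i x \<le> c$i} (u$i))"
          unfolding D_ind prod_indicator_vec by (auto simp: indicator_def)
      qed
      also have "\<dots> = (\<Prod>i\<in>UNIV. \<integral>\<^sup>+x. indicator {x\<in>{0..1}. x \<le> b$i \<and> T i x \<le> c$i} x \<partial>lborel)"
        by (rule nn_integral_vec_prod) (use Sm in simp)
      also have "\<dots> = (\<Prod>i\<in>UNIV. E i)"
        unfolding E_def by (intro prod.cong refl nn_integral_indicator) (use Sm in simp)
      finally have e1: "emeasure (distr (density lborel D) lborel Tv) {..c} = (\<Prod>i\<in>UNIV. E i)" .
      have "emeasure (density lborel (H b)) {..c} = (\<integral>\<^sup>+v. H b v * indicator {..c} v \<partial>lborel)"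
        by (intro emeasure_density) auto
      also have "\<dots> = (\<integral>\<^sup>+v. (\<Prod>i\<in>UNIV. ennreal (G i (v$i) (b$i)) * indicator {..c$i} (v$i)) \<partial>lborel)"
      proof (intro nn_integral_cong)
        fix v :: "real^'d"
        have "indicator {..c} v = (\<Prod>i\<in>UNIV. indicator {..c$i} (v$i) :: ennreal)"
          unfolding prod_indicator_vec by (simp add: indicator_def less_eq_vec_def)
        then show "H b v * indicator {..c} v = (\<Prod>i\<in>UNIV. ennreal (G i (v$i) (b$i)) * indicator {..c$i} (v$i))"
          by (simp add: H_def prod.distrib)
      qed
      also have "\<dots> = (\<Prod>i\<in>UNIV. \<integral>\<^sup>+x. ennreal (G i x (b$i)) * indicator {..c$i} x \<partial>lborel)"
        by (rule nn_integral_vec_prod) simp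
      also have "\<dots> = (\<Prod>i\<in>UNIV. E i)"
        unfolding E_def G_def A_def by (intro prod.cong refl rudp.F5[OF R])
      finally have e2: "emeasure (density lborel (H b)) {..c} = (\<Prod>i\<in>UNIV. E i)" .
      show "emeasure (distr (density lborel D) lborel Tv) {..c} = emeasure (density lborel (H b)) {..c}"
        using e1 e2 by simp
      have "E i \<noteq> \<top>" for i
      proof -
        have "E i \<le> emeasure lborel {0..1::real}"
          unfolding E_def by (intro emeasure_mono) auto
        then show ?thesis by (auto simp: top_unique)
      qed
      then show "emeasure (distr (density lborel D) lborel Tv) {..c} \<noteq> \<infinity>"
        using e1 by (simp add: ennreal_prod_eq_top)
    qed simp_all
    also have "(\<integral>\<^sup>+v. cstar v \<partial>density lborel (H b)) = \<Phi> b"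
      by (subst nn_integral_density) (auto simp: \<Phi>_def mult.commute)
    finally show ?thesis .
  qed
  have "distr M lborel X = density lborel f"
  proof (rule measure_eq_atMost)
    fix b :: "real^'d"
    show "emeasure (distr M lborel X) {..b} = emeasure (density lborel f) {..b}"
      using P1 P2 by simp
    interpret D: prob_space "distr M lborel X" using Xm by (intro prob_space_distr) simp
    show "emeasure (distr M lborel X) {..b} \<noteq> \<infinity>" by simp
  qed simp_all
  then have "distributed M lborel X f"
    using Xm fm by (simp add: distributed_def)
  moreover have "X = (\<lambda>\<omega>. \<chi> i. stoch_inv (T i) (partition_set (a i) (L i)) (V \<omega> $ i) (Z \<omega> $ i))"
    by (simp add: X_def[abs_def] A_def)
  ultimately show ?thesis by (simp add: f_def[abs_def])
qed

end
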